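(* For every positive integer $n$, there exists a connected graph $G$ such that $\det(G) = 2n$ and $\det'(G) = n$.
   Context: A vertex subset $S$ of $G$ is a vertex determining set if the only automorphism of $G$ fixing every vertex of $S$ is the identity; the determining number $\det(G)$ is the minimum size of a vertex determining set. For a graph $G$ with at most one isolated vertex and no component isomorphic to $K_2$, an edge subset $T$ is an edge determining set if the only automorphism $\phi$ of $G$ satisfying $\{\phi(u),\phi(v)\}=\{u,v\}$ for all $\{u,v\}\in T$ is the identity; the determining index $\det'(G)$ is the minimum size of an edge determining set. *)

theory Defs
  imports Main
begin

definition simple_graph :: "'a set \<Rightarrow> 'a set set \<Rightarrow> bool" where
  "simple_graph V E \<longleftrightarrow> finite V \<and>
     (\<forall>e\<in>E. \<exists>u v. e = {u, v} \<and> u \<noteq> v \<and> u \<in> V \<and> v \<in> V)"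

definition adj :: "'a set set \<Rightarrow> 'a \<Rightarrow> 'a \<Rightarrow> bool" where
  "adj E u v \<longleftrightarrow> {u, v} \<in> E"

definition connected_graph :: "'a set \<Rightarrow> 'a set set \<Rightarrow> bool" where
  "connected_graph V E \<longleftrightarrow> simple_graph V E \<and> V \<noteq> {} \<and>
     (\<forall>u\<in>V. \<forall>v\<in>V. (adj E)\<^sup>*\<^sup>* u v)"

definition automorphism :: "'a set \<Rightarrow> 'a set set \<Rightarrow> ('a \<Rightarrow> 'a) \<Rightarrow> bool" where
  "automorphism V E \<phi> \<longleftrightarrow> bij_betw \<phi> V V \<and>
     (\<forall>u\<in>V. \<forall>v\<in>V. {u, v} \<in> E \<longleftrightarrow> {\<phi> u, \<phi> v} \<in> E)"

definition vertex_determining_set :: "'a set \<Rightarrow> 'a set set \<Rightarrow> 'a set \<Rightarrow> bool" where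
  "vertex_determining_set V E S \<longleftrightarrow> S \<subseteq> V \<and>
     (\<forall>\<phi>. automorphism V E \<phi> \<and> (\<forall>x\<in>S. \<phi> x = x) \<longrightarrow> (\<forall>x\<in>V. \<phi> x = x))"

definition determining_number :: "'a set \<Rightarrow> 'a set set \<Rightarrow> nat" where
  "determining_number V E = Min {card S | S. vertex_determining_set V E S}"

text \<open>Hypothesis under which the determining index is defined: at most one isolated vertex
  and no connected component isomorphic to K2.\<close>
definition isolated :: "'a set \<Rightarrow> 'a set set \<Rightarrow> 'a \<Rightarrow> bool" where
  "isolated V E v \<longleftrightarrow> v \<in> V \<and> (\<forall>w. {v, w} \<notin> E)"

definition K2_component :: "'a set set \<Rightarrow> 'a \<Rightarrow> 'a \<Rightarrow> bool" where
  "K2_component E u v \<longleftrightarrow> u \<noteq> v \<and> {u, v} \<in> E \<and>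
     (\<forall>w. {u, w} \<in> E \<longrightarrow> w = v) \<and> (\<forall>w. {v, w} \<in> E \<longrightarrow> w = u)"

definition det_index_admissible :: "'a set \<Rightarrow> 'a set set \<Rightarrow> bool" where
  "det_index_admissible V E \<longleftrightarrow>
     card {v. isolated V E v} \<le> 1 \<and> \<not> (\<exists>u v. K2_component E u v)"

definition edge_determining_set :: "'a set \<Rightarrow> 'a set set \<Rightarrow> 'a set set \<Rightarrow> bool" where
  "edge_determining_set V E T \<longleftrightarrow> T \<subseteq> E \<and>
     (\<forall>\<phi>. automorphism V E \<phi> \<and> (\<forall>u v. {u, v} \<in> T \<longrightarrow> {\<phi> u, \<phi> v} = {u, v})
        \<longrightarrow> (\<forall>x\<in>V. \<phi> x = x))"

definition determining_index :: "'a set \<Rightarrow> 'a set set \<Rightarrow> nat" where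
  "determining_index V E = Min {card T | T. edge_determining_set V E T}"

end

theory Submission imports Defs begin
definition R :: "nat \<Rightarrow> nat \<Rightarrow> nat \<Rightarrow> bool" where
 "R n u v \<longleftrightarrow> (u = 0 \<and> v = 1) \<or> (\<exists>i<n. (u = 0 \<and> (v = 4*i+2 \<or> v = 4*i+3)) \<or> ((u = 4*i+2 \<or> u = 4*i+3) \<and> (v = 4*i+4 \<or> v = 4*i+5)))"
definition GV :: "nat \<Rightarrow> nat set" where "GV n = {..<4*n+2}"
definition GE :: "nat \<Rightarrow> nat set set" where "GE n = {{u,v} | u v. R n u v}"

lemma memE: "{a,b} \<in> GE n \<longleftrightarrow> R n a b \<or> R n b a"
  unfolding GE_def by (auto simp: doubleton_eq_iff)

lemma N0: "{0,w} \<in> GE n \<longleftrightarrow> w = 1 \<or> (\<exists>i<n. w = 4*i+2 \<or> w = 4*i+3)"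
  unfolding memE R_def by (auto; presburger)
lemma N1: "{1,w} \<in> GE n \<longleftrightarrow> w = 0"
  unfolding memE R_def by (auto; presburger)
lemma Nx1: "i<n \<Longrightarrow> {4*i+2,w} \<in> GE n \<longleftrightarrow> w = 0 \<or> w = 4*i+4 \<or> w = 4*i+5"
  unfolding memE R_def by (auto; presburger)
lemma Nx2: "i<n \<Longrightarrow> {4*i+3,w} \<in> GE n \<longleftrightarrow> w = 0 \<or> w = 4*i+4 \<or> w = 4*i+5"
  unfolding memE R_def by (auto; presburger)
lemma Ny1: "i<n \<Longrightarrow> {4*i+4,w} \<in> GE n \<longleftrightarrow> w = 4*i+2 \<or> w = 4*i+3"
  unfolding memE R_def by (auto; presburger)
lemma Ny2: "i<n \<Longrightarrow> {4*i+5,w} \<in> GE n \<longleftrightarrow> w = 4*i+2 \<or> w = 4*i+3"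
  unfolding memE R_def by (auto; presburger)
lemma Vcases: "v \<in> GV n \<Longrightarrow> v = 0 \<or> v = 1 \<or> (\<exists>i<n. v = 4*i+2 \<or> v = 4*i+3 \<or> v = 4*i+4 \<or> v = 4*i+5)"
  unfolding GV_def by (rule ccontr) (auto, presburger)
lemma R_V: "R n u v \<Longrightarrow> u \<in> GV n \<and> v \<in> GV n \<and> u \<noteq> v"
  unfolding R_def GV_def by auto

lemma aut_edge: "automorphism V E \<phi> \<Longrightarrow> a\<in>V \<Longrightarrow> b\<in>V \<Longrightarrow> {a,b}\<in>E \<Longrightarrow> {\<phi> a, \<phi> b}\<in>E"
  unfolding automorphism_def by blast
lemma aut_inj: "automorphism V E \<phi> \<Longrightarrow> a\<in>V \<Longrightarrow> b\<in>V \<Longrightarrow> \<phi> a = \<phi> b \<Longrightarrow> a = b"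
  unfolding automorphism_def bij_betw_def inj_on_def by blast

lemma inV: "i < n \<Longrightarrow> 4*i+2 \<in> GV n" "i < n \<Longrightarrow> 4*i+3 \<in> GV n" "i < n \<Longrightarrow> 4*i+4 \<in> GV n"
  "i < n \<Longrightarrow> 4*i+5 \<in> GV n" "0 \<in> GV n" "1 \<in> GV n"
  unfolding GV_def by auto

lemma fix_all:
  assumes A: "automorphism (GV n) (GE n) \<phi>" and n: "n \<ge> 1"
    and F: "\<And>i. i < n \<Longrightarrow> \<phi> (4*i+2) = 4*i+2 \<and> \<phi> (4*i+4) = 4*i+4"
  shows "\<forall>x\<in>GV n. \<phi> x = x"
proof -
  note E = aut_edge[OF A] and I = aut_inj[OF A]
  have s1: "\<phi> (4*i+3) = 4*i+3" if i: "i<n" for i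
  proof -
    have "{4*i+4, 4*i+3} \<in> GE n" using Ny1[OF i] by simp
    from E[OF inV(3)[OF i] inV(2)[OF i] this] F[OF i]
    have "\<phi> (4*i+3) = 4*i+2 \<or> \<phi> (4*i+3) = 4*i+3" using Ny1[OF i] by simp
    moreover have "\<phi> (4*i+3) \<noteq> 4*i+2"
      using I[OF inV(2)[OF i] inV(1)[OF i]] F[OF i] by auto
    ultimately show ?thesis by simp
  qed
  have s2: "\<phi> (4*i+5) = 4*i+5" if i: "i<n" for i
  proof -
    have "{4*i+2, 4*i+5} \<in> GE n" using Nx1[OF i] by simp
    from E[OF inV(1)[OF i] inV(4)[OF i] this] F[OF i]
    have c: "\<phi> (4*i+5) = 0 \<or> \<phi> (4*i+5) = 4*i+4 \<or> \<phi> (4*i+5) = 4*i+5" using Nx1[OF i] by simp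
    have "\<phi> (4*i+5) \<noteq> 4*i+4"
      using I[OF inV(4)[OF i] inV(3)[OF i]] F[OF i] by auto
    moreover have "\<phi> (4*i+5) \<noteq> 0"
    proof
      assume z: "\<phi> (4*i+5) = 0"
      have "{4*i+2, 0} \<in> GE n" using Nx1[OF i] by simp
      from E[OF inV(1)[OF i] inV(5) this] F[OF i]
      have "\<phi> 0 = 0 \<or> \<phi> 0 = 4*i+4 \<or> \<phi> 0 = 4*i+5" using Nx1[OF i] by simp
      moreover have "\<phi> 0 \<noteq> 0" using I[OF inV(5) inV(4)[OF i]] z by auto
      moreover have "\<phi> 0 \<noteq> 4*i+4" using I[OF inV(5) inV(3)[OF i]] F[OF i] by auto
      ultimately have p0: "\<phi> 0 = 4*i+5" by simp
      have "{0,1} \<in> GE n" using N0 by simp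
      from E[OF inV(5) inV(6) this] p0
      have "\<phi> 1 = 4*i+2 \<or> \<phi> 1 = 4*i+3" using Ny2[OF i] by simp
      then show False
        using I[OF inV(6) inV(1)[OF i]] I[OF inV(6) inV(2)[OF i]] F[OF i] s1[OF i] by auto
    qed
    ultimately show ?thesis using c by simp
  qed
  have s0: "\<phi> 0 = 0"
  proof -
    have i: "0 < n" using n by simp
    have "{4*0+2, 0} \<in> GE n" using Nx1[OF i] by simp
    from E[OF inV(1)[OF i] inV(5) this] F[OF i]
    have "\<phi> 0 = 0 \<or> \<phi> 0 = 4*0+4 \<or> \<phi> 0 = 4*0+5" using Nx1[OF i] by simp
    moreover have "\<phi> 0 \<noteq> 4*0+4" using I[OF inV(5) inV(3)[OF i]] F[OF i] by auto
    moreover have "\<phi> 0 \<noteq> 4*0+5" using I[OF inV(5) inV(4)[OF i]] s2[OF i] by auto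
    ultimately show ?thesis by simp
  qed
  have s3: "\<phi> 1 = 1"
  proof -
    have "{0,1} \<in> GE n" using N0 by simp
    from E[OF inV(5) inV(6) this] s0
    have "\<phi> 1 = 1 \<or> (\<exists>i<n. \<phi> 1 = 4*i+2 \<or> \<phi> 1 = 4*i+3)" using N0 by simp
    then show ?thesis
      using I[OF inV(6) inV(1)] I[OF inV(6) inV(2)] F s1 by fastforce
  qed
  show ?thesis
  proof
    fix x assume "x \<in> GV n"
    from Vcases[OF this] show "\<phi> x = x" using s0 s1 s2 s3 F by auto
  qed
qed

lemma twin_aut:
  assumes sg: "simple_graph V E" and uv: "u\<in>V" "v\<in>V" "u\<noteq>v"
    and H: "\<And>w. {u,w}\<in>E \<longleftrightarrow> {v,w}\<in>E"
  shows "automorphism V E (\<lambda>x. if x=u then v else if x=v then u else x)"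
proof -
  have sing: "{x} \<notin> E" for x
  proof
    assume "{x} \<in> E"
    then obtain a b where "{x} = {a,b}" "a\<noteq>b" using sg unfolding simple_graph_def by blast
    then show False by (metis doubleton_eq_iff insert_absorb2)
  qed
  have uvE: "{u,v} \<notin> E" using H[of u] sing[of u] sing[of v] by (simp add: insert_commute)
  let ?f = "\<lambda>x. if x=u then v else if x=v then u else x"
  have bij: "bij_betw ?f V V"
    by (rule bij_betw_byWitness[where f'="?f"]) (use uv in auto)
  have H': "{w,u}\<in>E \<longleftrightarrow> {w,v}\<in>E" for w using H[of w] by (simp add: insert_commute)
  have uvE': "{v,u} \<notin> E" using uvE by (simp add: insert_commute)
  have pres: "{a,b}\<in>E \<longleftrightarrow> {?f a, ?f b}\<in>E" for a b
  proof (cases "a=u \<or> a=v")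
    case True
    then show ?thesis
    proof
      assume a: "a = u"
      show ?thesis using uv(3) H H' sing uvE uvE' a by (cases "b=u"; cases "b=v") simp_all
    next
      assume a: "a = v"
      show ?thesis using uv(3) H H' sing uvE uvE' a by (cases "b=u"; cases "b=v") simp_all
    qed
  next
    case False
    then show ?thesis using uv(3) H H' by (cases "b=u"; cases "b=v") simp_all
  qed
  show ?thesis unfolding automorphism_def using bij pres by blast
qed

lemma sg: "simple_graph (GV n) (GE n)"
  unfolding simple_graph_def GE_def GV_def using R_V unfolding GV_def by blast

lemma GE_finite: "finite (GE n)"
proof -
  have "GE n \<subseteq> Pow (GV n)" unfolding GE_def using R_V by blast
  then show ?thesis by (rule finite_subset) (simp add: GV_def)
qed

lemma twin_x: "i<n \<Longrightarrow> {4*i+2,w}\<in>GE n \<longleftrightarrow> {4*i+3,w}\<in>GE n"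
  using Nx1 Nx2 by simp
lemma twin_y: "i<n \<Longrightarrow> {4*i+4,w}\<in>GE n \<longleftrightarrow> {4*i+5,w}\<in>GE n"
  using Ny1 Ny2 by simp

lemma twin_vds:
  assumes "vertex_determining_set V E S" "simple_graph V E" "u\<in>V" "v\<in>V" "u\<noteq>v"
    "\<And>w. {u,w}\<in>E \<longleftrightarrow> {v,w}\<in>E"
  shows "u \<in> S \<or> v \<in> S"
proof (rule ccontr)
  assume "\<not> (u \<in> S \<or> v \<in> S)"
  then have "\<forall>x\<in>S. (if x=u then v else if x=v then u else x) = x" by auto
  with twin_aut[OF assms(2-6)] assms(1)
  have "\<forall>x\<in>V. (if x=u then v else if x=v then u else x) = x" unfolding vertex_determining_set_def by blast
  then have "(if u=u then v else if u=v then u else u) = u" using assms(3) by blast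
  then show False using assms(5) by simp
qed

lemma twin_eds:
  assumes "edge_determining_set V E T" "simple_graph V E" "u\<in>V" "v\<in>V" "u\<noteq>v"
    "\<And>w. {u,w}\<in>E \<longleftrightarrow> {v,w}\<in>E"
  shows "\<exists>e\<in>T. u \<in> e \<or> v \<in> e"
proof (rule ccontr)
  assume c: "\<not> ?thesis"
  let ?f = "\<lambda>x. if x=u then v else if x=v then u else x"
  have "\<forall>a b. {a,b}\<in>T \<longrightarrow> {?f a, ?f b} = {a,b}"
  proof (intro allI impI)
    fix a b assume "{a,b} \<in> T"
    then have "a \<noteq> u" "a \<noteq> v" "b \<noteq> u" "b \<noteq> v" using c by blast+
    then show "{?f a, ?f b} = {a,b}" by simp
  qed
  with twin_aut[OF assms(2-6)] assms(1)
  have "\<forall>x\<in>V. ?f x = x" unfolding edge_determining_set_def by blast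
  then have "?f u = u" using assms(3) by blast
  then show False using assms(5) by simp
qed

lemma vds_lower:
  assumes S: "vertex_determining_set (GV n) (GE n) S"
  shows "2*n \<le> card S"
proof -
  have ex: "\<exists>s\<in>S. s = 2*j+2 \<or> s = 2*j+3" if j: "j < 2*n" for j
  proof (cases "even j")
    case True
    then obtain i where ji: "j = 2*i" by blast
    with j have i: "i<n" by simp
    have "4*i+2 \<in> S \<or> 4*i+3 \<in> S"
      by (rule twin_vds[OF S sg inV(1)[OF i] inV(2)[OF i]]) (use twin_x[OF i] in auto)
    then show ?thesis using ji by auto
  next
    case False
    then obtain i where ji: "j = 2*i+1" using oddE by blast
    with j have i: "i<n" by simp
    have "4*i+4 \<in> S \<or> 4*i+5 \<in> S"
      by (rule twin_vds[OF S sg inV(3)[OF i] inV(4)[OF i]]) (use twin_y[OF i] in auto)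
    moreover have "2*j+2 = 4*i+4" "2*j+3 = 4*i+5" using ji by simp_all
    ultimately show ?thesis by metis
  qed
  define f where "f j = (SOME s. s\<in>S \<and> (s = 2*j+2 \<or> s = 2*j+3))" for j
  have fP: "f j \<in> S \<and> (f j = 2*j+2 \<or> f j = 2*j+3)" if "j<2*n" for j
    unfolding f_def using someI_ex[OF ex[OF that, unfolded Bex_def]] .
  have "inj_on f {..<2*n}"
  proof (rule inj_onI)
    fix a b assume "a \<in> {..<2*n}" "b \<in> {..<2*n}" "f a = f b"
    then show "a = b" using fP[of a] fP[of b] by auto
  qed
  moreover have "f ` {..<2*n} \<subseteq> S" using fP by auto
  moreover have "finite S" using S unfolding vertex_determining_set_def GV_def
    using finite_subset by blast
  ultimately have "card {..<2*n} \<le> card S" by (rule card_inj_on_le)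
  then show ?thesis by simp
qed

lemma edge_gadget:
  assumes "e \<in> GE n" "4*i+2 \<in> e \<or> 4*i+3 \<in> e" "4*j+2 \<in> e \<or> 4*j+3 \<in> e"
  shows "i = j"
proof -
  from assms(1) obtain a b where e: "e = {a,b}" "R n a b" unfolding GE_def by blast
  have u: "x = 4*i+2 \<or> x = 4*i+3 \<Longrightarrow> x = 4*j+2 \<or> x = 4*j+3 \<Longrightarrow> i = j" for x i j :: nat
    by presburger
  have nz: "0 \<noteq> 4*k+2" "0 \<noteq> 4*k+3" "1 \<noteq> 4*k+2" "1 \<noteq> 4*k+3" for k :: nat by simp_all
  have ny: "4*k+4 \<noteq> 4*m+2" "4*k+4 \<noteq> 4*m+3" "4*k+5 \<noteq> 4*m+2" "4*k+5 \<noteq> 4*m+3" for k m :: nat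
    by presburger+
  from e(2) consider "a = 0" "b = 1" | k where "a = 0" "b = 4*k+2 \<or> b = 4*k+3"
    | k where "a = 4*k+2 \<or> a = 4*k+3" "b = 4*k+4 \<or> b = 4*k+5"
    unfolding R_def by blast
  then show ?thesis
  proof cases
    case 1 then show ?thesis using assms(2) e(1) nz by auto
  next
    case (2 k)
    then have "4*i+2 \<noteq> a" "4*i+3 \<noteq> a" "4*j+2 \<noteq> a" "4*j+3 \<noteq> a" by simp_all
    then have "b = 4*i+2 \<or> b = 4*i+3" "b = 4*j+2 \<or> b = 4*j+3"
      using assms(2,3) e(1) by auto
    then show ?thesis by (rule u)
  next
    case (3 k)
    then have "4*i+2 \<noteq> b" "4*i+3 \<noteq> b" "4*j+2 \<noteq> b" "4*j+3 \<noteq> b"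
      using ny[of k] by metis+
    then have "a = 4*i+2 \<or> a = 4*i+3" "a = 4*j+2 \<or> a = 4*j+3"
      using assms(2,3) e(1) by auto
    then show ?thesis by (rule u)
  qed
qed

lemma eds_lower:
  assumes T: "edge_determining_set (GV n) (GE n) T"
  shows "n \<le> card T"
proof -
  have ex: "\<exists>e\<in>T. 4*i+2 \<in> e \<or> 4*i+3 \<in> e" if i: "i < n" for i
    by (rule twin_eds[OF T sg inV(1)[OF i] inV(2)[OF i]]) (use twin_x[OF i] in auto)
  define f where "f i = (SOME e. e\<in>T \<and> (4*i+2 \<in> e \<or> 4*i+3 \<in> e))" for i
  have fP: "f i \<in> T \<and> (4*i+2 \<in> f i \<or> 4*i+3 \<in> f i)" if "i<n" for i
    unfolding f_def using someI_ex[OF ex[OF that, unfolded Bex_def]] .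
  have TE: "T \<subseteq> GE n" using T unfolding edge_determining_set_def by blast
  have "inj_on f {..<n}"
  proof (rule inj_onI)
    fix a b assume "a \<in> {..<n}" "b \<in> {..<n}" "f a = f b"
    then have "a < n" "b < n" "f a \<in> GE n" using fP TE by auto
    then show "a = b" using fP[of a] fP[of b] \<open>f a = f b\<close> edge_gadget[of "f a" n a b] by metis
  qed
  moreover have "f ` {..<n} \<subseteq> T" using fP by auto
  moreover have "finite T" using TE GE_finite finite_subset by blast
  ultimately have "card {..<n} \<le> card T" by (rule card_inj_on_le)
  then show ?thesis by simp
qed

lemma adj_sym: "adj E a b \<Longrightarrow> adj E b a" unfolding adj_def by (simp add: insert_commute)

lemma reach:
  assumes "v \<in> GV n" shows "(adj (GE n))\<^sup>*\<^sup>* 0 v \<and> (adj (GE n))\<^sup>*\<^sup>* v 0"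
proof -
  have "(adj (GE n))\<^sup>*\<^sup>* 0 v"
  proof (cases "v = 0 \<or> v = 1")
    case True
    then show ?thesis using N0 unfolding adj_def by (auto simp: r_into_rtranclp)
  next
    case False
    then obtain i where i: "i < n" and vv: "v = 4*i+2 \<or> v = 4*i+3 \<or> v = 4*i+4 \<or> v = 4*i+5"
      using Vcases[OF assms] by blast
    have a0: "adj (GE n) 0 (4*i+2)" using N0 i unfolding adj_def by blast
    have a1: "adj (GE n) 0 (4*i+3)" using N0 i unfolding adj_def by blast
    have a2: "adj (GE n) (4*i+2) (4*i+4)" using Nx1 i unfolding adj_def by blast
    have a3: "adj (GE n) (4*i+2) (4*i+5)" using Nx1 i unfolding adj_def by blast
    from vv show ?thesis
      using a0 a1 a2 a3 by (meson converse_rtranclp_into_rtranclp r_into_rtranclp)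
  qed
  moreover have "symp (adj (GE n))" using adj_sym by (metis sympI)
  ultimately show ?thesis using symp_rtranclp by (metis sympD)
qed

lemma conn: "n \<ge> 1 \<Longrightarrow> connected_graph (GV n) (GE n)"
proof -
  have "\<forall>u\<in>GV n. \<forall>v\<in>GV n. (adj (GE n))\<^sup>*\<^sup>* u v"
  proof (intro ballI)
    fix u v assume "u \<in> GV n" "v \<in> GV n"
    then have "(adj (GE n))\<^sup>*\<^sup>* u 0" "(adj (GE n))\<^sup>*\<^sup>* 0 v" using reach by blast+
    then show "(adj (GE n))\<^sup>*\<^sup>* u v" by (rule rtranclp_trans)
  qed
  moreover have "GV n \<noteq> {}" using inV(5) by blast
  ultimately show ?thesis unfolding connected_graph_def using sg by blast
qed

lemma two_nbrs:
  assumes "u \<in> GV n" "u \<noteq> 1" "n \<ge> 1"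
  shows "\<exists>w1 w2. w1 \<noteq> w2 \<and> {u,w1} \<in> GE n \<and> {u,w2} \<in> GE n"
proof (cases "u = 0")
  case True then show ?thesis using N0 assms(3) by (intro exI[of _ 1] exI[of _ 2]) auto
next
  case False
  then obtain i where i: "i < n" and uu: "u = 4*i+2 \<or> u = 4*i+3 \<or> u = 4*i+4 \<or> u = 4*i+5"
    using Vcases[OF assms(1)] assms(2) by blast
  from uu show ?thesis
  proof (elim disjE)
    assume "u = 4*i+2" then show ?thesis using Nx1[OF i] by (intro exI[of _ 0] exI[of _ "4*i+4"]) auto
  next
    assume "u = 4*i+3" then show ?thesis using Nx2[OF i] by (intro exI[of _ 0] exI[of _ "4*i+4"]) auto
  next
    assume "u = 4*i+4" then show ?thesis using Ny1[OF i] by (intro exI[of _ "4*i+2"] exI[of _ "4*i+3"]) auto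
  next
    assume "u = 4*i+5" then show ?thesis using Ny2[OF i] by (intro exI[of _ "4*i+2"] exI[of _ "4*i+3"]) auto
  qed
qed

lemma edge_V: "{a,b} \<in> GE n \<Longrightarrow> a \<in> GV n \<and> b \<in> GV n"
  using memE R_V by blast

lemma admissible: "n \<ge> 1 \<Longrightarrow> det_index_admissible (GV n) (GE n)"
proof -
  assume n: "n \<ge> 1"
  have iso: "{v. isolated (GV n) (GE n) v} = {}"
  proof (rule ccontr)
    assume "{v. isolated (GV n) (GE n) v} \<noteq> {}"
    then obtain v where "v \<in> GV n" "\<forall>w. {v,w} \<notin> GE n" unfolding isolated_def by blast
    then show False using two_nbrs[OF _ _ n] N1 by (cases "v = 1") blast+
  qed
  have K2: "\<not> K2_component (GE n) u v" for u v
  proof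
    assume K: "K2_component (GE n) u v"
    then have uv: "{u,v} \<in> GE n" and Ku: "\<forall>w. {u, w} \<in> GE n \<longrightarrow> w = v"
      and Kv: "\<forall>w. {v, w} \<in> GE n \<longrightarrow> w = u" unfolding K2_component_def by blast+
    have uV: "u \<in> GV n" and vV: "v \<in> GV n" using edge_V[OF uv] by blast+
    show False
    proof (cases "u = 1")
      case True
      then have "v = 0" using uv N1 by simp
      then obtain w1 w2 where "w1 \<noteq> w2" "{v,w1} \<in> GE n" "{v,w2} \<in> GE n"
        using two_nbrs[OF vV _ n] by auto
      then show False using Kv by blast
    next
      case False
      then obtain w1 w2 where "w1 \<noteq> w2" "{u,w1} \<in> GE n" "{u,w2} \<in> GE n"
        using two_nbrs[OF uV _ n] by blast
      then show False using Ku by blast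
    qed
  qed
  show ?thesis unfolding det_index_admissible_def iso using K2 by simp
qed

lemma Min_card:
  assumes fin: "finite A" and sub: "\<And>S. P S \<Longrightarrow> S \<subseteq> A" and P0: "P S0" "card S0 = k"
    and low: "\<And>S. P S \<Longrightarrow> k \<le> card S"
  shows "Min {card S | S. P S} = k"
proof (rule Min_eqI)
  have "{card S | S. P S} \<subseteq> card ` Pow A" using sub by blast
  then show "finite {card S | S. P S}" using fin by (meson finite_Pow_iff finite_imageI finite_subset)
  show "\<And>y. y \<in> {card S |S. P S} \<Longrightarrow> k \<le> y" using low by blast
  show "k \<in> {card S |S. P S}" using P0 by blast
qed

lemma vds_upper: "n \<ge> 1 \<Longrightarrow> vertex_determining_set (GV n) (GE n) ((\<lambda>i. 4*i+2) ` {..<n} \<union> (\<lambda>i. 4*i+4) ` {..<n})"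
  unfolding vertex_determining_set_def
proof (intro conjI allI impI)
  show "(\<lambda>i. 4*i+2) ` {..<n} \<union> (\<lambda>i. 4*i+4) ` {..<n} \<subseteq> GV n" using inV by auto
  fix \<phi> assume n: "n \<ge> 1" and h: "automorphism (GV n) (GE n) \<phi> \<and>
     (\<forall>x\<in>(\<lambda>i. 4*i+2) ` {..<n} \<union> (\<lambda>i. 4*i+4) ` {..<n}. \<phi> x = x)"
  show "\<forall>x\<in>GV n. \<phi> x = x"
    by (rule fix_all[OF conjunct1[OF h] n]) (use h in auto)
qed

lemma card_S0: "card ((\<lambda>i. 4*i+2) ` {..<n} \<union> (\<lambda>i. 4*i+4) ` {..<(n::nat)}) = 2*n"
proof -
  have d: "(\<lambda>i. 4*i+2) ` {..<n} \<inter> (\<lambda>i. 4*i+4) ` {..<n} = {}"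
  proof (rule ccontr)
    assume "\<not> ?thesis"
    then obtain i j :: nat where "4*i+2 = 4*j+4" by auto
    then show False by presburger
  qed
  have "card ((\<lambda>i. 4*i+2) ` {..<n}) = n" by (subst card_image) (auto simp: inj_on_def)
  moreover have "card ((\<lambda>i. 4*i+4) ` {..<n}) = n" by (subst card_image) (auto simp: inj_on_def)
  ultimately show ?thesis by (subst card_Un_disjoint) (use d in auto)
qed

lemma eds_upper: "n \<ge> 1 \<Longrightarrow> edge_determining_set (GV n) (GE n) ((\<lambda>i. {4*i+2, 4*i+4}) ` {..<n})"
  unfolding edge_determining_set_def
proof (intro conjI allI impI)
  show "(\<lambda>i. {4*i+2, 4*i+4}) ` {..<n} \<subseteq> GE n" using Nx1 by auto
  fix \<phi> assume n: "n \<ge> 1" and h: "automorphism (GV n) (GE n) \<phi> \<and>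
     (\<forall>u v. {u, v} \<in> (\<lambda>i. {4*i+2, 4*i+4}) ` {..<n} \<longrightarrow> {\<phi> u, \<phi> v} = {u, v})"
  have A: "automorphism (GV n) (GE n) \<phi>" using h by blast
  note E = aut_edge[OF A] and I = aut_inj[OF A]
  have "\<phi> (4*i+2) = 4*i+2 \<and> \<phi> (4*i+4) = 4*i+4" if i: "i < n" for i
  proof -
    have "{\<phi> (4*i+2), \<phi> (4*i+4)} = {4*i+2, 4*i+4}" using h i by blast
    then consider "\<phi> (4*i+2) = 4*i+2" "\<phi> (4*i+4) = 4*i+4"
      | "\<phi> (4*i+2) = 4*i+4" "\<phi> (4*i+4) = 4*i+2" by (auto simp: doubleton_eq_iff)
    then show ?thesis
    proof cases
      case 1 then show ?thesis by simp
    next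
      case 2
      have "{4*i+2, 0} \<in> GE n" using Nx1[OF i] by simp
      from E[OF inV(1)[OF i] inV(5) this] 2
      have "\<phi> 0 = 4*i+2 \<or> \<phi> 0 = 4*i+3" using Ny1[OF i] by simp
      moreover have "\<phi> 0 \<noteq> 4*i+2" using I[OF inV(5) inV(3)[OF i]] 2 by auto
      ultimately have p0: "\<phi> 0 = 4*i+3" by simp
      have "{4*i+2, 4*i+5} \<in> GE n" using Nx1[OF i] by simp
      from E[OF inV(1)[OF i] inV(4)[OF i] this] 2
      have "\<phi> (4*i+5) = 4*i+2 \<or> \<phi> (4*i+5) = 4*i+3" using Ny1[OF i] by simp
      moreover have "\<phi> (4*i+5) \<noteq> 4*i+2" using I[OF inV(4)[OF i] inV(3)[OF i]] 2 by auto
      ultimately have "\<phi> (4*i+5) = \<phi> 0" using p0 by simp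
      then have "4*i+5 = (0::nat)" using I[OF inV(4)[OF i] inV(5)] by blast
      then show ?thesis by simp
    qed
  qed
  then show "\<forall>x\<in>GV n. \<phi> x = x" by (rule fix_all[OF A n])
qed

lemma card_T0: "card ((\<lambda>i. {4*i+2, 4*i+4}) ` {..<(n::nat)}) = n"
proof -
  have "inj_on (\<lambda>i::nat. {4*i+2, 4*i+4}) {..<n}"
  proof (rule inj_onI)
    fix i j :: nat assume "{4*i+2, 4*i+4} = {4*j+2, 4*j+4}"
    then have "4*i+2 = 4*j+2 \<or> 4*i+2 = 4*j+4" by (auto simp: doubleton_eq_iff)
    then show "i = j" by presburger
  qed
  then show ?thesis by (simp add: card_image)
qed

theorem theorem9:
  fixes n :: nat
  assumes "n \<ge> 1"
  shows "\<exists>(V :: nat set) (E :: nat set set).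
           connected_graph V E \<and> det_index_admissible V E \<and>
           determining_number V E = 2 * n \<and> determining_index V E = n"
proof (intro exI conjI)
  show "connected_graph (GV n) (GE n)" by (rule conn[OF assms])
  show "det_index_admissible (GV n) (GE n)" by (rule admissible[OF assms])
  show "determining_number (GV n) (GE n) = 2 * n"
    unfolding determining_number_def
  proof (rule Min_card[where A = "GV n" and P = "vertex_determining_set (GV n) (GE n)"])
    show "finite (GV n)" by (simp add: GV_def)
    show "\<And>S. vertex_determining_set (GV n) (GE n) S \<Longrightarrow> S \<subseteq> GV n"
      by (simp add: vertex_determining_set_def)
    show "vertex_determining_set (GV n) (GE n) ((\<lambda>i. 4*i+2) ` {..<n} \<union> (\<lambda>i. 4*i+4) ` {..<n})"
      by (rule vds_upper[OF assms])
    show "card ((\<lambda>i. 4*i+2) ` {..<n} \<union> (\<lambda>i. 4*i+4) ` {..<n}) = 2*n" by (rule card_S0)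
    show "\<And>S. vertex_determining_set (GV n) (GE n) S \<Longrightarrow> 2*n \<le> card S" by (rule vds_lower)
  qed
  show "determining_index (GV n) (GE n) = n"
    unfolding determining_index_def
  proof (rule Min_card[where A = "GE n" and P = "edge_determining_set (GV n) (GE n)"])
    show "finite (GE n)" by (rule GE_finite)
    show "\<And>S. edge_determining_set (GV n) (GE n) S \<Longrightarrow> S \<subseteq> GE n"
      by (simp add: edge_determining_set_def)
    show "edge_determining_set (GV n) (GE n) ((\<lambda>i. {4*i+2, 4*i+4}) ` {..<n})"
      by (rule eds_upper[OF assms])
    show "card ((\<lambda>i. {4*i+2, 4*i+4}) ` {..<n}) = n" by (rule card_T0)
    show "\<And>S. edge_determining_set (GV n) (GE n) S \<Longrightarrow> n \<le> card S" by (rule eds_lower)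
  qed
qed
end
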